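(* Let $\lambda,R_c,H,\alpha_L,\alpha_N,B,C>0$. For $0<\delta<1$ define, with $P_L(r_0)=\frac{1}{1+C\exp(-B(\arctan(H/r_0)-C))}$, $P_N=1-P_L$, $A_s(r_0)=(\delta(H^2+r_0^2)^{\alpha_s/2})^{1/\alpha_N}$, $B_s(r_0)=(\frac1\delta(H^2+r_0^2)^{\alpha_s/2})^{1/\alpha_N}$ ($s\in\{L,N\}$), the area fractions $\bar{C}_{\mathcal{A}_i}=C_{\mathcal{A}_i}/(\pi R_c^2)$, where $C_{\mathcal{A}_1}=2\pi\sum_{s}\int_0^{R_c}P_s(r_0)F_{r_1|r_0}(A_s(r_0))r_0\,dr_0$, $C_{\mathcal{A}_2}=2\pi\sum_{s}\int_0^{R_c}P_s(r_0)(F_{r_1|r_0}(B_s(r_0))-F_{r_1|r_0}(A_s(r_0)))r_0\,dr_0$, $C_{\mathcal{A}_3}=2\pi\sum_{s}\int_0^{R_c}P_s(r_0)(1-F_{r_1|r_0}(B_s(r_0)))r_0\,dr_0$. Then, on $0<\delta<1$, $\bar{C}_{\mathcal{A}_1}$ and $\bar{C}_{\mathcal{A}_3}$ increase with $\delta$, while $\bar{C}_{\mathcal{A}_2}$ decreases with $\delta$.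
   Context: $F_{r_1|r_0}$ is the CDF of the distance $r_1$ from a point $x_0=(r_0,0)$, $0\le r_0\le R_c$, to the nearest point of $\Phi\setminus\{y:\|y\|\le R_c\}$, where $\Phi$ is a homogeneous Poisson point process of intensity $\lambda$ on $\mathbb{R}^2$: $F_{r_1|r_0}(r)=0$ for $r\le R_c-r_0$, $=1-e^{-\lambda\zeta_2(r)}$ for $R_c-r_0<r<R_c+r_0$ where $\zeta_2(r)=\pi r^2-\theta_1R_c^2+R_c^2\sin\theta_1\cos\theta_1-\theta_2r^2+r^2\sin\theta_2\cos\theta_2$, $\theta_1=\arccos\frac{R_c^2+r_0^2-r^2}{2R_cr_0}$, $\theta_2=\arccos\frac{r_0^2+r^2-R_c^2}{2r_0r}$, and $=1-e^{-\lambda(\pi r^2-\pi R_c^2)}$ otherwise. $C_{\mathcal{A}_i}$ is the expected area of the set of users in the malfunction disc served by the nearest ground station only ($i=1$), cooperatively by the UAV and the nearest ground station ($i=2$), or by the UAV only ($i=3$), and $\delta$ is the cooperation parameter. *)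

theory Defs
  imports "HOL-Analysis.Analysis"
begin

(* CDF F_{r1|r0}(r) of the distance from x0=(r0,0) to the nearest PPP point outside the disc of radius Rc *)
definition zeta2 :: "real \<Rightarrow> real \<Rightarrow> real \<Rightarrow> real" where
  "zeta2 Rc r0 r =
     (let th1 = arccos ((Rc^2 + r0^2 - r^2) / (2 * Rc * r0));
          th2 = arccos ((r0^2 + r^2 - Rc^2) / (2 * r0 * r))
      in pi * r^2 - th1 * Rc^2 + Rc^2 * sin th1 * cos th1 - th2 * r^2 + r^2 * sin th2 * cos th2)"

definition Fcdf :: "real \<Rightarrow> real \<Rightarrow> real \<Rightarrow> real \<Rightarrow> real" where
  "Fcdf lam Rc r0 r =
     (if r \<le> Rc - r0 then 0
      else if r < Rc + r0 then 1 - exp (- lam * zeta2 Rc r0 r)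
      else 1 - exp (- lam * (pi * r^2 - pi * Rc^2)))"

definition PL :: "real \<Rightarrow> real \<Rightarrow> real \<Rightarrow> real \<Rightarrow> real" where
  "PL H B C r0 = 1 / (1 + C * exp (- B * (arctan (H / r0) - C)))"

definition PN :: "real \<Rightarrow> real \<Rightarrow> real \<Rightarrow> real \<Rightarrow> real" where
  "PN H B C r0 = 1 - PL H B C r0"

definition Asf :: "real \<Rightarrow> real \<Rightarrow> real \<Rightarrow> real \<Rightarrow> real \<Rightarrow> real" where
  "Asf \<delta> H als alN r0 = (\<delta> * (H^2 + r0^2) powr (als / 2)) powr (1 / alN)"

definition Bsf :: "real \<Rightarrow> real \<Rightarrow> real \<Rightarrow> real \<Rightarrow> real \<Rightarrow> real" where
  "Bsf \<delta> H als alN r0 = ((1 / \<delta>) * (H^2 + r0^2) powr (als / 2)) powr (1 / alN)"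

definition CA1 :: "real \<Rightarrow> real \<Rightarrow> real \<Rightarrow> real \<Rightarrow> real \<Rightarrow> real \<Rightarrow> real \<Rightarrow> real \<Rightarrow> real" where
  "CA1 lam Rc H alL alN B C \<delta> = 2 * pi *
     (integral {0..Rc} (\<lambda>r0. PL H B C r0 * Fcdf lam Rc r0 (Asf \<delta> H alL alN r0) * r0) +
      integral {0..Rc} (\<lambda>r0. PN H B C r0 * Fcdf lam Rc r0 (Asf \<delta> H alN alN r0) * r0))"

definition CA2 :: "real \<Rightarrow> real \<Rightarrow> real \<Rightarrow> real \<Rightarrow> real \<Rightarrow> real \<Rightarrow> real \<Rightarrow> real \<Rightarrow> real" where
  "CA2 lam Rc H alL alN B C \<delta> = 2 * pi *
     (integral {0..Rc} (\<lambda>r0. PL H B C r0 *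
         (Fcdf lam Rc r0 (Bsf \<delta> H alL alN r0) - Fcdf lam Rc r0 (Asf \<delta> H alL alN r0)) * r0) +
      integral {0..Rc} (\<lambda>r0. PN H B C r0 *
         (Fcdf lam Rc r0 (Bsf \<delta> H alN alN r0) - Fcdf lam Rc r0 (Asf \<delta> H alN alN r0)) * r0))"

definition CA3 :: "real \<Rightarrow> real \<Rightarrow> real \<Rightarrow> real \<Rightarrow> real \<Rightarrow> real \<Rightarrow> real \<Rightarrow> real \<Rightarrow> real" where
  "CA3 lam Rc H alL alN B C \<delta> = 2 * pi *
     (integral {0..Rc} (\<lambda>r0. PL H B C r0 * (1 - Fcdf lam Rc r0 (Bsf \<delta> H alL alN r0)) * r0) +
      integral {0..Rc} (\<lambda>r0. PN H B C r0 * (1 - Fcdf lam Rc r0 (Bsf \<delta> H alN alN r0)) * r0))"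

definition CbarA1 where "CbarA1 lam Rc H alL alN B C \<delta> = CA1 lam Rc H alL alN B C \<delta> / (pi * Rc^2)"
definition CbarA2 where "CbarA2 lam Rc H alL alN B C \<delta> = CA2 lam Rc H alL alN B C \<delta> / (pi * Rc^2)"
definition CbarA3 where "CbarA3 lam Rc H alL alN B C \<delta> = CA3 lam Rc H alL alN B C \<delta> / (pi * Rc^2)"

end

theory Submission
  imports Defs
begin

definition c1f :: "real \<Rightarrow> real \<Rightarrow> real \<Rightarrow> real" where
  "c1f Rc r0 r = (Rc^2 + r0^2 - r^2) / (2 * Rc * r0)"
definition c2f :: "real \<Rightarrow> real \<Rightarrow> real \<Rightarrow> real" where
  "c2f Rc r0 r = (r0^2 + r^2 - Rc^2) / (2 * r0 * r)"
definition gf :: "real \<Rightarrow> real \<Rightarrow> real \<Rightarrow> real" where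
  "gf Rc r0 r = pi * r^2 - arccos (c1f Rc r0 r) * Rc^2
     + Rc^2 * sqrt (1 - (c1f Rc r0 r)^2) * c1f Rc r0 r
     - arccos (c2f Rc r0 r) * r^2 + r^2 * sqrt (1 - (c2f Rc r0 r)^2) * c2f Rc r0 r"

lemma piece_deriv:
  assumes d: "(c has_real_derivative c') (at r)" and lo: "-1 < c r" and hi: "c r < 1"
  shows "((\<lambda>x. - arccos (c x) + sqrt (1 - (c x)^2) * c x) has_real_derivative
           2 * c' * sqrt (1 - (c r)^2)) (at r)"
proof -
  define s where "s = sqrt (1 - (c r)^2)"
  have pos: "1 - (c r)^2 > 0" using lo hi by (smt (verit) abs_le_square_iff power2_eq_square power_one real_sqrt_abs real_sqrt_lt_1_iff)
  hence sp: "s > 0" and ss: "s^2 = 1 - (c r)^2" unfolding s_def by auto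
  have "((\<lambda>x. - arccos (c x) + sqrt (1 - (c x)^2) * c x) has_real_derivative
     (- (inverse (- sqrt (1 - (c r)^2)) * c') + ((inverse (sqrt (1 - (c r)^2)) / 2 * (- (2 * c r * c'))) * c r + sqrt (1 - (c r)^2) * c'))) (at r)"
    by (rule derivative_eq_intros DERIV_arccos[THEN DERIV_chain2] DERIV_real_sqrt[THEN DERIV_chain2] d refl | use lo hi pos in force)+
  note D = this
  have E: "(- (inverse (- sqrt (1 - (c r)^2)) * c') + ((inverse (sqrt (1 - (c r)^2)) / 2 * (- (2 * c r * c'))) * c r + sqrt (1 - (c r)^2) * c'))
     = 2 * c' * sqrt (1 - (c r)^2)"
    unfolding s_def[symmetric] using sp ss by (simp add: field_simps power2_eq_square) (metis distrib_left mult.right_neutral)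
  show ?thesis using D unfolding E .
qed

lemma c_ranges:
  assumes r0: "0 < r0" "r0 \<le> Rc" and r: "Rc - r0 \<le> r" "r \<le> Rc + r0"
  shows "-1 \<le> c1f Rc r0 r \<and> c1f Rc r0 r \<le> 1 \<and> -1 \<le> c2f Rc r0 r \<and> c2f Rc r0 r \<le> 1"
proof -
  have Rc: "Rc > 0" using r0 by simp
  have den: "2 * Rc * r0 > 0" using Rc r0 by simp
  have sq1: "(Rc - r0)^2 \<le> r^2" using r r0 by (intro power_mono) auto
  have sq2: "r^2 \<le> (Rc + r0)^2" using r r0 by (intro power_mono) auto
  have A: "-1 \<le> c1f Rc r0 r \<and> c1f Rc r0 r \<le> 1"
    unfolding c1f_def using den sq1 sq2 by (simp add: divide_le_eq le_divide_eq power2_eq_square algebra_simps)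
  have B: "-1 \<le> c2f Rc r0 r \<and> c2f Rc r0 r \<le> 1"
  proof (cases "r = 0")
    case True thus ?thesis by (simp add: c2f_def)
  next
    case False
    hence rp: "r > 0" using r r0 by simp
    have d2: "2 * r0 * r > 0" using rp r0 by simp
    have q1: "(r - r0)^2 \<le> Rc^2" using r r0 rp using abs_le_square_iff[of "r-r0" Rc] by auto
    have q2: "Rc^2 \<le> (r + r0)^2" using r r0 by (intro power_mono) auto
    show ?thesis unfolding c2f_def using d2 q1 q2 by (simp add: divide_le_eq le_divide_eq power2_eq_square algebra_simps)
  qed
  show ?thesis using A B by blast
qed

lemma c_ranges_strict:
  assumes r0: "0 < r0" "r0 \<le> Rc" and r: "Rc - r0 < r" "r < Rc + r0"
  shows "-1 < c1f Rc r0 r \<and> c1f Rc r0 r < 1 \<and> -1 < c2f Rc r0 r \<and> c2f Rc r0 r < 1"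
proof -
  have Rc: "Rc > 0" using r0 by simp
  have rp: "r > 0" using r r0 by simp
  have den: "2 * Rc * r0 > 0" using Rc r0 by simp
  have sq1: "(Rc - r0)^2 < r^2" using r r0 by (intro power_strict_mono) auto
  have sq2: "r^2 < (Rc + r0)^2" using r r0 rp by (intro power_strict_mono) auto
  have A: "-1 < c1f Rc r0 r \<and> c1f Rc r0 r < 1"
    unfolding c1f_def using den sq1 sq2 by (simp add: divide_less_eq less_divide_eq power2_eq_square algebra_simps)
  have d2: "2 * r0 * r > 0" using rp r0 by simp
  have "\<bar>r - r0\<bar> < Rc" using r r0 rp by auto
  hence q1: "(r - r0)^2 < Rc^2" using power_strict_mono[of "\<bar>r-r0\<bar>" Rc 2] by simp
  have q2: "Rc^2 < (r + r0)^2" using r r0 by (intro power_strict_mono) auto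
  have B: "-1 < c2f Rc r0 r \<and> c2f Rc r0 r < 1"
    unfolding c2f_def using d2 q1 q2 by (simp add: divide_less_eq less_divide_eq power2_eq_square algebra_simps)
  show ?thesis using A B by blast
qed

lemma heron:
  assumes r0: "0 < r0" "0 < Rc" "0 < r"
  shows "Rc * sqrt (1 - (c1f Rc r0 r)^2) = r * sqrt (1 - (c2f Rc r0 r)^2)"
proof -
  have "Rc^2 * (1 - (c1f Rc r0 r)^2) = r^2 * (1 - (c2f Rc r0 r)^2)"
    unfolding c1f_def c2f_def using r0 by (simp add: field_simps power2_eq_square)
  hence "sqrt (Rc^2 * (1 - (c1f Rc r0 r)^2)) = sqrt (r^2 * (1 - (c2f Rc r0 r)^2))" by simp
  thus ?thesis using r0 by (simp add: real_sqrt_mult)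
qed

lemma g_deriv:
  assumes r0: "0 < r0" "r0 \<le> Rc" and r: "Rc - r0 < r" "r < Rc + r0"
  shows "(gf Rc r0 has_real_derivative 2 * r * (pi - arccos (c2f Rc r0 r))) (at r)"
proof -
  have Rc: "Rc > 0" using r0 by simp
  have rp: "r > 0" using r r0 by simp
  note cr = c_ranges_strict[OF r0 r]
  have dc1: "(c1f Rc r0 has_real_derivative (- (2 * r) / (2 * Rc * r0))) (at r)"
    unfolding c1f_def[abs_def] using r0 Rc by (auto intro!: derivative_eq_intros)
  have dc2: "(c2f Rc r0 has_real_derivative ((r^2 - r0^2 + Rc^2) / (2 * r0 * r^2))) (at r)"
    unfolding c2f_def[abs_def] using rp r0
    by (auto intro!: derivative_eq_intros simp: field_simps power2_eq_square)
  define s1 where "s1 = sqrt (1 - (c1f Rc r0 r)^2)"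
  define s2 where "s2 = sqrt (1 - (c2f Rc r0 r)^2)"
  define P2f where "P2f = (\<lambda>x. - arccos (c2f Rc r0 x) + sqrt (1 - (c2f Rc r0 x)^2) * c2f Rc r0 x)"
  have eqg: "gf Rc r0 = (\<lambda>x. pi * x^2 + Rc^2 * (- arccos (c1f Rc r0 x) + sqrt (1 - (c1f Rc r0 x)^2) * c1f Rc r0 x)
            + x^2 * P2f x)"
    unfolding gf_def[abs_def] P2f_def by (auto simp: fun_eq_iff algebra_simps)
  have D: "(gf Rc r0 has_real_derivative (pi * (2 * r) + Rc^2 * (2 * (- (2 * r) / (2 * Rc * r0)) * s1)
          + ((2 * r) * P2f r + r^2 * (2 * ((r^2 - r0^2 + Rc^2) / (2 * r0 * r^2)) * s2)))) (at r)"
  proof -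
    have Q1: "((\<lambda>x. - arccos (c1f Rc r0 x) + sqrt (1 - (c1f Rc r0 x)^2) * c1f Rc r0 x) has_real_derivative
       2 * (- (2 * r) / (2 * Rc * r0)) * s1) (at r)"
      unfolding s1_def using piece_deriv[OF dc1] cr by simp
    have Q2: "(P2f has_real_derivative 2 * ((r^2 - r0^2 + Rc^2) / (2 * r0 * r^2)) * s2) (at r)"
      unfolding s2_def P2f_def using piece_deriv[OF dc2] cr by simp
    have T1: "((\<lambda>x. pi * x^2) has_real_derivative pi * (2 * r)) (at r)"
      by (auto intro!: derivative_eq_intros)
    have T2: "((\<lambda>x. x^2) has_real_derivative 2 * r) (at r)"
      by (auto intro!: derivative_eq_intros)
    show ?thesis unfolding eqg
      apply (intro DERIV_add T1 DERIV_cmult Q1)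
      using DERIV_mult[OF T2 Q2] by simp
  qed
  have h: "Rc * s1 = r * s2" unfolding s1_def s2_def by (rule heron) (use r0 rp in auto)
  have "pi * (2 * r) + Rc^2 * (2 * (- (2 * r) / (2 * Rc * r0)) * s1)
          + ((2 * r) * P2f r + r^2 * (2 * ((r^2 - r0^2 + Rc^2) / (2 * r0 * r^2)) * s2))
        = 2 * r * (pi - arccos (c2f Rc r0 r)) + (- 2 * r * (Rc * s1) / r0 + 2 * r * s2 * c2f Rc r0 r
           + (r^2 - r0^2 + Rc^2) * s2 / r0)"
    unfolding P2f_def s2_def[symmetric] using r0 rp Rc by (simp add: field_simps power2_eq_square)
  also have "- 2 * r * (Rc * s1) / r0 + 2 * r * s2 * c2f Rc r0 r + (r^2 - r0^2 + Rc^2) * s2 / r0 = 0"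
    unfolding h c2f_def using r0 rp by (simp add: field_simps power2_eq_square)
  finally show ?thesis using D by simp
qed

lemma g_cont:
  assumes r0: "0 < r0" "r0 \<le> Rc"
  shows "continuous_on {Rc - r0 .. Rc + r0} (gf Rc r0)"
proof -
  have Rc: "Rc > 0" using r0 by simp
  have c2c: "continuous_on {Rc - r0 .. Rc + r0} (c2f Rc r0)"
  proof (cases "r0 = Rc")
    case True
    have "continuous_on {Rc - r0 .. Rc + r0} (\<lambda>r. r / (2 * Rc))" by (intro continuous_intros) (use Rc in auto)
    moreover have "\<And>r. c2f Rc r0 r = r / (2 * Rc)" unfolding c2f_def True using Rc
      by (case_tac "r = 0") (auto simp: field_simps power2_eq_square)
    ultimately show ?thesis by (simp add: fun_eq_iff[symmetric])
  next
    case False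
    hence "\<forall>r \<in> {Rc - r0 .. Rc + r0}. r \<noteq> 0" using r0 by auto
    thus ?thesis unfolding c2f_def[abs_def] using r0 by (intro continuous_intros) auto
  qed
  have c1c: "continuous_on {Rc - r0 .. Rc + r0} (c1f Rc r0)"
    unfolding c1f_def[abs_def] using r0 by (intro continuous_intros) auto
  have cr: "\<forall>r \<in> {Rc - r0 .. Rc + r0}. -1 \<le> c1f Rc r0 r \<and> c1f Rc r0 r \<le> 1 \<and> -1 \<le> c2f Rc r0 r \<and> c2f Rc r0 r \<le> 1"
    using c_ranges[OF r0] by auto
  show ?thesis unfolding gf_def[abs_def]
    by (intro continuous_intros continuous_on_arccos c1c c2c) (use cr in auto)
qed

lemma g_mono:
  assumes r0: "0 < r0" "r0 \<le> Rc" and xy: "Rc - r0 \<le> x" "x \<le> y" "y \<le> Rc + r0"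
  shows "gf Rc r0 x \<le> gf Rc r0 y"
proof (rule DERIV_nonneg_imp_increasing_open[OF xy(2)])
  fix t assume t: "x < t" "t < y"
  hence t': "Rc - r0 < t" "t < Rc + r0" using xy by auto
  have "0 \<le> 2 * t * (pi - arccos (c2f Rc r0 t))"
    using arccos_bounded[of "c2f Rc r0 t"] c_ranges_strict[OF r0 t'] t' r0 by auto
  thus "\<exists>y. (gf Rc r0 has_real_derivative y) (at t) \<and> 0 \<le> y" using g_deriv[OF r0 t'] by blast
next
  show "continuous_on {x..y} (gf Rc r0)" using continuous_on_subset[OF g_cont[OF r0]] xy by auto
qed

lemma g_left: assumes r0: "0 < r0" "r0 \<le> Rc" shows "gf Rc r0 (Rc - r0) = 0"
proof -
  have "c1f Rc r0 (Rc - r0) = 1" unfolding c1f_def using r0 by (simp add: field_simps power2_eq_square)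
  moreover have "Rc - r0 \<noteq> 0 \<Longrightarrow> c2f Rc r0 (Rc - r0) = -1" unfolding c2f_def using r0
    by (simp add: field_simps power2_eq_square)
  ultimately show ?thesis unfolding gf_def by (cases "Rc - r0 = 0") auto
qed

lemma g_right: assumes r0: "0 < r0" "r0 \<le> Rc" shows "gf Rc r0 (Rc + r0) = pi * (Rc + r0)^2 - pi * Rc^2"
proof -
  have "c1f Rc r0 (Rc + r0) = -1" unfolding c1f_def using r0 by (simp add: field_simps power2_eq_square)
  moreover have "c2f Rc r0 (Rc + r0) = 1"
  proof -
    have "Rc * (r0 * 2) + r0 * (r0 * 2) > 0" using r0 by (intro add_pos_pos) auto
    thus ?thesis unfolding c2f_def using r0 by (simp add: field_simps power2_eq_square)
  qed
  ultimately show ?thesis unfolding gf_def by simp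
qed

lemma zeta2_g:
  assumes r0: "0 < r0" "r0 \<le> Rc" and r: "Rc - r0 \<le> r" "r \<le> Rc + r0"
  shows "zeta2 Rc r0 r = gf Rc r0 r"
proof -
  note cr = c_ranges[OF r0 r]
  have e1: "(Rc^2 + r0^2 - r^2) / (2 * Rc * r0) = c1f Rc r0 r" by (simp add: c1f_def)
  have e2: "(r0^2 + r^2 - Rc^2) / (2 * r0 * r) = c2f Rc r0 r" by (simp add: c2f_def)
  show ?thesis unfolding zeta2_def gf_def Let_def e1 e2
    using cr by (simp add: sin_arccos_abs cos_arccos_abs abs_le_iff)
qed

definition zf :: "real \<Rightarrow> real \<Rightarrow> real \<Rightarrow> real" where
  "zf Rc r0 r = (if r < Rc + r0 then zeta2 Rc r0 r else pi * r^2 - pi * Rc^2)"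

lemma zf_facts:
  assumes r0: "0 \<le> r0" "r0 \<le> Rc" and r: "Rc - r0 < r" "r \<le> r'"
  shows "0 \<le> zf Rc r0 r \<and> zf Rc r0 r \<le> zf Rc r0 r'"
proof -
  have sqmono: "pi * x^2 - pi * Rc^2 \<le> pi * y^2 - pi * Rc^2" if "0 \<le> x" "x \<le> y" for x y
    using power_mono[OF that(2) that(1), of 2] by simp
  have nn: "0 \<le> pi * x^2 - pi * Rc^2" if "Rc + r0 \<le> x" for x
    using sqmono[of Rc x] that r0 by auto
  show ?thesis
  proof (cases "r < Rc + r0")
    case True
    hence p: "0 < r0" using r by auto
    have z: "zf Rc r0 r = gf Rc r0 r" unfolding zf_def using True zeta2_g[OF p r0(2)] r by auto
    have 0: "0 \<le> gf Rc r0 r" using g_mono[OF p r0(2), of "Rc - r0" r] g_left[OF p r0(2)] r True by auto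
    have "gf Rc r0 r \<le> zf Rc r0 r'"
    proof (cases "r' < Rc + r0")
      case True
      thus ?thesis unfolding zf_def using zeta2_g[OF p r0(2), of r'] g_mono[OF p r0(2), of r r'] r by auto
    next
      case False
      have "gf Rc r0 r \<le> gf Rc r0 (Rc + r0)" using g_mono[OF p r0(2), of r "Rc + r0"] r True by auto
      also have "\<dots> \<le> pi * r'^2 - pi * Rc^2" unfolding g_right[OF p r0(2)] using False r0 by (intro sqmono) auto
      finally show ?thesis unfolding zf_def using False by simp
    qed
    thus ?thesis using z 0 by simp
  next
    case False
    thus ?thesis unfolding zf_def using nn[of r] sqmono[of r r'] r r0 by auto
  qed
qed

lemma F_eq: "Fcdf lam Rc r0 r = (if r \<le> Rc - r0 then 0 else 1 - exp (- lam * zf Rc r0 r))"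
  unfolding Fcdf_def zf_def by auto

lemma F_nonneg:
  assumes "lam > 0" "0 \<le> r0" "r0 \<le> Rc"
  shows "0 \<le> Fcdf lam Rc r0 r"
proof (cases "r \<le> Rc - r0")
  case False
  hence "0 \<le> zf Rc r0 r" using zf_facts[of r0 Rc r r] assms by auto
  hence "exp (- lam * zf Rc r0 r) \<le> 1" using assms by simp
  thus ?thesis unfolding F_eq using False by simp
qed (simp add: F_eq)

lemma F_le1: "Fcdf lam Rc r0 r \<le> 1"
  unfolding F_eq by auto

lemma F_mono:
  assumes "lam > 0" "0 \<le> r0" "r0 \<le> Rc" "r \<le> r'"
  shows "Fcdf lam Rc r0 r \<le> Fcdf lam Rc r0 r'"
proof (cases "r \<le> Rc - r0")
  case True
  thus ?thesis using F_nonneg[OF assms(1-3), of r'] by (simp add: F_eq)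
next
  case False
  hence "zf Rc r0 r \<le> zf Rc r0 r'" using zf_facts[of r0 Rc r r'] assms by auto
  hence "exp (- lam * zf Rc r0 r') \<le> exp (- lam * zf Rc r0 r)" using assms by (simp add: mult_left_mono)
  thus ?thesis unfolding F_eq using False assms by auto
qed

lemma arccos_out: assumes "\<bar>y\<bar> > 1" shows "arccos y = arccos 2"
proof -
  have ne: "cos x \<noteq> y" "cos x \<noteq> 2" for x
  proof -
    have h: "- 1 \<le> cos x" "cos x \<le> 1" by simp_all
    have "y > 1 \<or> y < -1" using assms by auto
    thus "cos x \<noteq> y" using h by linarith
    show "cos x \<noteq> 2" using h by linarith
  qed
  show ?thesis unfolding arccos_def by (simp add: ne)
qed

lemma borel_measurable_arccos [measurable]: "arccos \<in> borel_measurable borel"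
proof -
  have eq: "arccos = (\<lambda>y. if y \<in> {-1..1} then arccos (max (-1) (min 1 y)) else arccos 2)"
  proof
    fix y :: real
    show "arccos y = (if y \<in> {-1..1} then arccos (max (-1) (min 1 y)) else arccos 2)"
    proof (cases "y \<in> {-1..1}")
      case True
      hence "max (-1) (min 1 y) = y" by auto
      thus ?thesis using True by simp
    next
      case False
      hence "\<bar>y\<bar> > 1" by auto
      thus ?thesis using False arccos_out[of y] by simp
    qed
  qed
  have "continuous_on UNIV (\<lambda>y::real. arccos (max (-1) (min 1 y)))"
    by (intro continuous_intros) auto
  hence [measurable]: "(\<lambda>y::real. arccos (max (-1) (min 1 y))) \<in> borel_measurable borel"
    by (rule borel_measurable_continuous_onI)
  show ?thesis by (subst eq) measurable
qed

lemma Fcdf_meas [measurable]: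
  assumes [measurable]: "f \<in> borel_measurable M" "h \<in> borel_measurable M"
  shows "(\<lambda>x. Fcdf lam Rc (f x) (h x)) \<in> borel_measurable M"
  unfolding Fcdf_def zeta2_def Let_def by measurable

lemma PL_meas [measurable]: "PL H B C \<in> borel_measurable borel"
  unfolding PL_def by measurable
lemma PN_meas [measurable]: "PN H B C \<in> borel_measurable borel"
  unfolding PN_def by measurable
lemma Asf_meas [measurable]: "Asf d H a n \<in> borel_measurable borel"
  unfolding Asf_def by measurable
lemma Bsf_meas [measurable]: "Bsf d H a n \<in> borel_measurable borel"
  unfolding Bsf_def by measurable

lemma integrable_bdd:
  fixes f :: "real \<Rightarrow> real"
  assumes [measurable]: "f \<in> borel_measurable borel" and bnd: "\<And>x. x \<in> {a..b} \<Longrightarrow> \<bar>f x\<bar> \<le> K"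
  shows "f integrable_on {a..b}"
proof -
  have "set_integrable lborel {a..b} f"
    unfolding set_integrable_def
    by (rule integrableI_bounded_set_indicator[where B=K]) (use bnd in \<open>auto simp: emeasure_lborel_Icc_eq\<close>)
  thus ?thesis by (rule set_borel_integral_eq_integral(1))
qed

lemma int_ok:
  fixes P f :: "real \<Rightarrow> real"
  assumes [measurable]: "P \<in> borel_measurable borel" "f \<in> borel_measurable borel"
    and b: "\<And>x. x \<in> {0..Rc} \<Longrightarrow> 0 \<le> P x \<and> P x \<le> 1 \<and> \<bar>f x\<bar> \<le> 1"
  shows "(\<lambda>x. P x * f x * x) integrable_on {0..Rc}"
proof (rule integrable_bdd[where K = Rc])
  fix x assume x: "x \<in> {0..Rc}"
  have "\<bar>P x\<bar> * \<bar>f x\<bar> \<le> 1" using b[OF x] by (intro mult_le_one) auto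
  hence "\<bar>P x\<bar> * \<bar>f x\<bar> * \<bar>x\<bar> \<le> 1 * Rc" using x by (intro mult_mono) auto
  thus "\<bar>P x * f x * x\<bar> \<le> Rc" by (simp add: abs_mult)
qed measurable

lemma int_cmp:
  fixes P f g :: "real \<Rightarrow> real"
  assumes [measurable]: "P \<in> borel_measurable borel" "f \<in> borel_measurable borel" "g \<in> borel_measurable borel"
    and b: "\<And>x. x \<in> {0..Rc} \<Longrightarrow> 0 \<le> P x \<and> P x \<le> 1 \<and> \<bar>f x\<bar> \<le> 1 \<and> \<bar>g x\<bar> \<le> 1 \<and> f x \<le> g x"
  shows "integral {0..Rc} (\<lambda>x. P x * f x * x) \<le> integral {0..Rc} (\<lambda>x. P x * g x * x)"
proof (rule integral_le)
  show "(\<lambda>x. P x * f x * x) integrable_on {0..Rc}" by (rule int_ok) (use b in auto)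
  show "(\<lambda>x. P x * g x * x) integrable_on {0..Rc}" by (rule int_ok) (use b in auto)
  fix x assume x: "x \<in> {0..Rc}"
  have "P x * f x \<le> P x * g x" using b[OF x] by (intro mult_left_mono) auto
  thus "P x * f x * x \<le> P x * g x * x" using x by (intro mult_right_mono) auto
qed

lemma PL_bnd: assumes "C > 0" shows "0 \<le> PL H B C x \<and> PL H B C x \<le> 1"
proof -
  have "1 \<le> 1 + C * exp (- B * (arctan (H / x) - C))" using assms by simp
  thus ?thesis unfolding PL_def by simp
qed

lemma PN_bnd: assumes "C > 0" shows "0 \<le> PN H B C x \<and> PN H B C x \<le> 1"
  using PL_bnd[OF assms] unfolding PN_def by auto

lemma A_mono:
  assumes "0 < d1" "d1 \<le> d2" "0 < alN"
  shows "Asf d1 H als alN x \<le> Asf d2 H als alN x"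
proof -
  have "0 \<le> (H^2 + x^2) powr (als / 2)" by simp
  thus ?thesis unfolding Asf_def using assms by (intro powr_mono2 mult_right_mono) simp_all
qed

lemma B_mono:
  assumes "0 < d1" "d1 \<le> d2" "0 < alN"
  shows "Bsf d2 H als alN x \<le> Bsf d1 H als alN x"
proof -
  have "0 \<le> (H^2 + x^2) powr (als / 2)" by simp
  moreover have "1 / d2 \<le> 1 / d1" using assms by (simp add: frac_le)
  ultimately show ?thesis unfolding Bsf_def using assms by (intro powr_mono2 mult_right_mono) simp_all
qed

theorem corollary1:
  fixes lam Rc H alL alN B C :: real
  assumes "lam > 0" "Rc > 0" "H > 0" "alL > 0" "alN > 0" "B > 0" "C > 0"
  shows "\<forall>d1 d2. 0 < d1 \<longrightarrow> d1 \<le> d2 \<longrightarrow> d2 < 1 \<longrightarrow>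
           CbarA1 lam Rc H alL alN B C d1 \<le> CbarA1 lam Rc H alL alN B C d2 \<and>
           CbarA3 lam Rc H alL alN B C d1 \<le> CbarA3 lam Rc H alL alN B C d2 \<and>
           CbarA2 lam Rc H alL alN B C d2 \<le> CbarA2 lam Rc H alL alN B C d1"
proof (intro allI impI)
  fix d1 d2 :: real
  assume d: "0 < d1" "d1 \<le> d2" "d2 < 1"
  have lam: "lam > 0" and Rc: "Rc > 0" and alN: "alN > 0" and C: "C > 0" using assms by auto
  have Fb: "\<And>x r. x \<in> {0..Rc} \<Longrightarrow> 0 \<le> Fcdf lam Rc x r \<and> Fcdf lam Rc x r \<le> 1"
    using F_nonneg[OF lam] F_le1 by auto
  have FA: "\<And>x als. x \<in> {0..Rc} \<Longrightarrow> Fcdf lam Rc x (Asf d1 H als alN x) \<le> Fcdf lam Rc x (Asf d2 H als alN x)"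
    using F_mono[OF lam] A_mono[OF d(1,2) alN] by auto
  have FB: "\<And>x als. x \<in> {0..Rc} \<Longrightarrow> Fcdf lam Rc x (Bsf d2 H als alN x) \<le> Fcdf lam Rc x (Bsf d1 H als alN x)"
    using F_mono[OF lam] B_mono[OF d(1,2) alN] by auto
  have P: "\<And>x. 0 \<le> PL H B C x \<and> PL H B C x \<le> 1" "\<And>x. 0 \<le> PN H B C x \<and> PN H B C x \<le> 1"
    using PL_bnd[OF C] PN_bnd[OF C] by auto
  have pos: "pi * Rc^2 > 0" "2 * pi > 0" using Rc by auto
  have I1: "integral {0..Rc} (\<lambda>x. Q x * Fcdf lam Rc x (Asf d1 H als alN x) * x)
         \<le> integral {0..Rc} (\<lambda>x. Q x * Fcdf lam Rc x (Asf d2 H als alN x) * x)"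
    if [measurable]: "Q \<in> borel_measurable borel" and Qb: "\<And>x. 0 \<le> Q x \<and> Q x \<le> 1" for Q als
    by (rule int_cmp) (use Qb Fb FA in \<open>auto simp: abs_le_iff\<close>)
  have I3: "integral {0..Rc} (\<lambda>x. Q x * (1 - Fcdf lam Rc x (Bsf d1 H als alN x)) * x)
         \<le> integral {0..Rc} (\<lambda>x. Q x * (1 - Fcdf lam Rc x (Bsf d2 H als alN x)) * x)"
    if [measurable]: "Q \<in> borel_measurable borel" and Qb: "\<And>x. 0 \<le> Q x \<and> Q x \<le> 1" for Q als
  proof (rule int_cmp)
    fix x assume x: "x \<in> {0..Rc}"
    show "0 \<le> Q x \<and> Q x \<le> 1 \<and> \<bar>1 - Fcdf lam Rc x (Bsf d1 H als alN x)\<bar> \<le> 1 \<and>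
      \<bar>1 - Fcdf lam Rc x (Bsf d2 H als alN x)\<bar> \<le> 1 \<and>
      1 - Fcdf lam Rc x (Bsf d1 H als alN x) \<le> 1 - Fcdf lam Rc x (Bsf d2 H als alN x)"
      using Qb[of x] Fb[OF x, of "Bsf d1 H als alN x"] Fb[OF x, of "Bsf d2 H als alN x"] FB[OF x, of als]
      by (auto simp: abs_le_iff)
  qed measurable
  have I2: "integral {0..Rc} (\<lambda>x. Q x * (Fcdf lam Rc x (Bsf d2 H als alN x) - Fcdf lam Rc x (Asf d2 H als alN x)) * x)
         \<le> integral {0..Rc} (\<lambda>x. Q x * (Fcdf lam Rc x (Bsf d1 H als alN x) - Fcdf lam Rc x (Asf d1 H als alN x)) * x)"
    if [measurable]: "Q \<in> borel_measurable borel" and Qb: "\<And>x. 0 \<le> Q x \<and> Q x \<le> 1" for Q als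
  proof (rule int_cmp)
    fix x assume x: "x \<in> {0..Rc}"
    show "0 \<le> Q x \<and> Q x \<le> 1 \<and> \<bar>Fcdf lam Rc x (Bsf d2 H als alN x) - Fcdf lam Rc x (Asf d2 H als alN x)\<bar> \<le> 1 \<and>
      \<bar>Fcdf lam Rc x (Bsf d1 H als alN x) - Fcdf lam Rc x (Asf d1 H als alN x)\<bar> \<le> 1 \<and>
      Fcdf lam Rc x (Bsf d2 H als alN x) - Fcdf lam Rc x (Asf d2 H als alN x)
       \<le> Fcdf lam Rc x (Bsf d1 H als alN x) - Fcdf lam Rc x (Asf d1 H als alN x)"
      using Qb[of x] Fb[OF x, of "Bsf d1 H als alN x"] Fb[OF x, of "Bsf d2 H als alN x"] FB[OF x, of als]
        Fb[OF x, of "Asf d1 H als alN x"] Fb[OF x, of "Asf d2 H als alN x"] FA[OF x, of als]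
      by (auto simp: abs_le_iff)
  qed measurable
  have "CA1 lam Rc H alL alN B C d1 \<le> CA1 lam Rc H alL alN B C d2"
    unfolding CA1_def using pos
    by (intro mult_left_mono add_mono I1 PL_meas PN_meas P) auto
  moreover have "CA3 lam Rc H alL alN B C d1 \<le> CA3 lam Rc H alL alN B C d2"
    unfolding CA3_def using pos
    by (intro mult_left_mono add_mono I3 PL_meas PN_meas P) auto
  moreover have "CA2 lam Rc H alL alN B C d2 \<le> CA2 lam Rc H alL alN B C d1"
    unfolding CA2_def using pos
    by (intro mult_left_mono add_mono I2 PL_meas PN_meas P) auto
  ultimately show "CbarA1 lam Rc H alL alN B C d1 \<le> CbarA1 lam Rc H alL alN B C d2 \<and>
           CbarA3 lam Rc H alL alN B C d1 \<le> CbarA3 lam Rc H alL alN B C d2 \<and>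
           CbarA2 lam Rc H alL alN B C d2 \<le> CbarA2 lam Rc H alL alN B C d1"
    unfolding CbarA1_def CbarA2_def CbarA3_def using pos by (auto intro: divide_right_mono)
qed

end
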